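(* Let $2\leq m<n$ be integers. Then $$\textup{res}(\Psi_m(x),\Psi_n(x))=\textup{res}(\Phi_m(x),\Phi_n(x)).$$
   Context: The Fibonacci polynomials are defined by $F_1(x)=1$, $F_2(x)=x$, and $F_n(x)=xF_{n-1}(x)+F_{n-2}(x)$ for $n\geq 3$. For $n\geq 2$, the $n$-th fibotomic polynomial $\Psi_n(x)\in\mathbb{Z}[x]$ is the product of the monic irreducible factors of $F_n(x)$ which are not factors of $F_k(x)$ for any $k<n$; also $\Psi_1(x)=1$. For $n\ge2$, $\Psi_n$ is monic of degree $\varphi(n)$ (Euler's totient). $\Phi_n(x)$ is the $n$-th cyclotomic polynomial. For monic polynomials $f,g$ with roots $a_1,\dots,a_r$ and $b_1,\dots,b_s$, the resultant is $\textup{res}(f,g)=\prod_{i,j}(a_i-b_j)$. *)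

theory Defs
  imports "HOL-Analysis.Analysis" "Subresultants.Resultant_Prelim"
begin

fun fibpoly :: "nat \<Rightarrow> int poly" where
  "fibpoly 0 = 0"
| "fibpoly (Suc 0) = 1"
| "fibpoly (Suc (Suc 0)) = [:0, 1:]"
| "fibpoly (Suc (Suc (Suc n))) = [:0, 1:] * fibpoly (Suc (Suc n)) + fibpoly (Suc n)"

definition fibotomic :: "nat \<Rightarrow> int poly" where
  "fibotomic n = (if n < 2 then 1 else
     \<Prod>{p :: int poly. monic p \<and> irreducible p \<and> p dvd fibpoly n \<and>
                      (\<forall>k\<in>{1..<n}. \<not> p dvd fibpoly k)})"

definition cyclotomic :: "nat \<Rightarrow> complex poly" where
  "cyclotomic n = (\<Prod>k\<in>{k. k < n \<and> coprime k n}. [:- cis (2 * pi * real k / real n), 1:])"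

end

theory Submission
  imports Defs "Subresultants.Subresultant_Gcd" "HOL-Computational_Algebra.Computational_Algebra" "HOL-Number_Theory.Number_Theory"
begin



lemma linprod_props:
  fixes A :: "'a::idom multiset"
  shows "degree (\<Prod>a\<in>#A. [:-a,1:]) = size A \<and> lead_coeff (\<Prod>a\<in>#A. [:-a,1:]) = 1"
proof (induction A)
  case empty
  then show ?case by simp
next
  case (add x A)
  have nz: "(\<Prod>a\<in>#A. [:-a,1:]) \<noteq> 0" using add by auto
  have "degree ([:-x,1:] * (\<Prod>a\<in>#A. [:-a,1:])) = degree [:-x,1:] + degree (\<Prod>a\<in>#A. [:-a,1:])"
    by (rule degree_mult_eq) (use nz in auto)
  moreover have "lead_coeff ([:-x,1:] * (\<Prod>a\<in>#A. [:-a,1:])) = lead_coeff [:-x,1:] * lead_coeff (\<Prod>a\<in>#A. [:-a,1:])"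
    by (rule lead_coeff_mult)
  ultimately show ?case using add by (auto simp del: mult_pCons_left)
qed

lemma complex_split:
  fixes p :: "complex poly"
  assumes "p \<noteq> 0"
  shows "\<exists>A. p = Polynomial.smult (lead_coeff p) (\<Prod>a\<in>#A. [:-a,1:])"
  using assms
proof (induction "degree p" arbitrary: p rule: less_induct)
  case less
  show ?case
  proof (cases "degree p = 0")
    case True
    then show ?thesis
      by (intro exI[of _ "{#}"]) (auto elim!: degree_eq_zeroE)
  next
    case False
    then have "\<not> constant (poly p)" by (simp add: constant_degree)
    then obtain z where z: "poly p z = 0" using fundamental_theorem_of_algebra by blast
    then obtain q where q: "p = [:-z,1:] * q" using poly_eq_0_iff_dvd by (metis dvdE)
    have q0: "q \<noteq> 0" using less.prems q by auto
    have "degree p = degree [:-z,1:] + degree q" unfolding q by (rule degree_mult_eq) (use q0 in auto)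
    then have dq: "degree q < degree p" by simp
    obtain A where A: "q = Polynomial.smult (lead_coeff q) (\<Prod>a\<in>#A. [:-a,1:])"
      using less.hyps[OF dq q0] by blast
    have lc: "lead_coeff p = lead_coeff q" unfolding q lead_coeff_mult by simp
    show ?thesis
      by (intro exI[of _ "add_mset z A"]) (subst q, subst A, simp add: lc mult.left_commute del: mult_pCons_left)
  qed
qed

lemma prod_swap_sign: "(\<Prod>b\<in>#B. \<Prod>a\<in>#A. (b - a)) = (-1)^(size A * size B) * (\<Prod>a\<in>#A. \<Prod>b\<in>#B. (a - b::'a::comm_ring_1))"
proof -
  have inner: "(\<Prod>a\<in>#A. (b - a)) = (-1)^size A * (\<Prod>a\<in>#A. (a - b))" for b
  proof -
    have "(\<Prod>a\<in>#A. (b - a)) = (\<Prod>a\<in>#A. (-1) * (a - b))" by simp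
    also have "\<dots> = (-1)^size A * (\<Prod>a\<in>#A. (a - b))"
      by (simp only: prod_mset.distrib prod_mset_constant)
    finally show ?thesis .
  qed
  have "(\<Prod>b\<in>#B. \<Prod>a\<in>#A. (b - a)) = (\<Prod>b\<in>#B. (-1)^size A * (\<Prod>a\<in>#A. (a - b)))"
    by (simp only: inner)
  also have "\<dots> = ((-1)^size A)^size B * (\<Prod>b\<in>#B. \<Prod>a\<in>#A. (a - b))"
    by (simp only: prod_mset.distrib prod_mset_constant)
  also have "(\<Prod>b\<in>#B. \<Prod>a\<in>#A. (a - b)) = (\<Prod>a\<in>#A. \<Prod>b\<in>#B. (a - b))"
    by (rule prod_mset.swap)
  finally show ?thesis by (simp add: power_mult)
qed

lemma split_facts:
  fixes f :: "'a::idom poly"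
  assumes f: "f = Polynomial.smult c (\<Prod>a\<in>#A. [:-a,1:])" and c: "c \<noteq> 0"
  shows "degree f = size A" "lead_coeff f = c" "f \<noteq> 0" "\<And>a. a \<in># A \<Longrightarrow> poly f a = 0"
    "\<And>x. poly f x = c * (\<Prod>a\<in>#A. x - a)"
proof -
  show "degree f = size A" "lead_coeff f = c" using linprod_props[of A] f c by auto
  then show "f \<noteq> 0" using c by auto
  show px: "poly f x = c * (\<Prod>a\<in>#A. x - a)" for x
    unfolding f by (simp add: poly_prod_mset)
  show "poly f a = 0" if "a \<in># A" for a
    unfolding px using that by (simp add: prod_mset_zero_iff)
qed

lemma res_step:
  fixes f g :: "complex poly"
  assumes IH: "\<And>(f'::complex poly) (g'::complex poly) c' A'. degree f' + degree g' < N \<Longrightarrow> f' = Polynomial.smult c' (\<Prod>a\<in>#A'. [:-a,1:])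
      \<Longrightarrow> c' \<noteq> 0 \<Longrightarrow> resultant f' g' = c' ^ degree g' * (\<Prod>a\<in>#A'. poly g' a)"
  and f: "f = Polynomial.smult c (\<Prod>a\<in>#A. [:-a,1:])" and c: "c \<noteq> 0"
  and N: "degree f + degree g = N" and fg: "degree f \<le> degree g"
  shows "resultant f g = c ^ degree g * (\<Prod>a\<in>#A. poly g a)"
proof (cases "degree f = 0")
  case True
  then have A: "A = {#}" using split_facts[OF f c] by auto
  then have "f = [:c:]" using f by simp
  then show ?thesis using A by simp
next
  case False
  note sf = split_facts[OF f c]
  have Ane: "A \<noteq> {#}" using False sf by auto
  have g0: "g \<noteq> 0" using False fg by auto
  define H where "H = g mod f"
  define Q where "Q = g div f"
  have gQH: "g = Q * f + H" unfolding H_def Q_def by simp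
  have FGH: "g + (- Q) * f = H" using gQH by simp
  have polyg: "poly g a = poly H a" if "a \<in># A" for a
    using sf(4)[OF that] gQH by simp
  have sw: "resultant f g = (-1)^(degree f * degree g) * resultant g f" by (rule resultant_swap)
  show ?thesis
  proof (cases "H = 0")
    case True
    have "g = Q * f" using gQH True by simp
    from subresultant_product[OF this fg, of 0] False
    have "subresultant 0 g f = 0" by simp
    then have "resultant g f = 0" by (simp add: subresultant_resultant)
    moreover have "(\<Prod>a\<in>#A. poly g a) = 0"
      using Ane polyg True by (auto simp: prod_mset_zero_iff)
    ultimately show ?thesis using sw by simp
  next
    case H0: False
    have dH: "degree H < degree f" unfolding H_def using degree_mod_less'[OF sf(3)] H0 H_def by auto
    have choice: "degree H < degree f \<or> H = 0 \<and> g \<noteq> 0 \<and> f \<noteq> 0" using dH by simp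
    show ?thesis
    proof (cases "degree H = 0")
      case True
      then obtain h where h: "H = [:h:]" by (auto elim: degree_eq_zeroE)
      from BT_lemma_1_13'[OF FGH fg choice, of 0] True dH
      have "subresultant 0 g f = Polynomial.smult ((-1)^(degree g * degree f) * lead_coeff f ^ degree g
         * lead_coeff H ^ (degree f - 1)) H" by simp
      then have "resultant g f = (-1)^(degree g * degree f) * c ^ degree g * h ^ (degree f - 1) * h"
        using sf(2) h by (simp add: subresultant_resultant)
      also have "\<dots> = (-1)^(degree g * degree f) * c ^ degree g * h ^ degree f"
        using False by (cases "degree f") auto
      finally have rg: "resultant g f = (-1)^(degree g * degree f) * c ^ degree g * h ^ degree f" .
      have "(\<Prod>a\<in>#A. poly g a) = (\<Prod>a\<in>#A. h)"
        using polyg h by (intro arg_cong[where f=prod_mset] image_mset_cong) auto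
      also have "\<dots> = h ^ degree f" using sf(1) by (simp add: prod_mset_constant)
      finally have "(\<Prod>a\<in>#A. poly g a) = h ^ degree f" .
      then show ?thesis using sw rg
        by (simp add: mult.commute mult.left_commute power_mult_distrib[symmetric] flip: power_add)
    next
      case False
      then have "0 < degree H" by simp
      from BT_lemma_1_12[OF FGH fg choice this]
      have "subresultant 0 g f = Polynomial.smult ((-1)^(degree g * degree f) * lead_coeff f ^ (degree g - degree H))
          (subresultant 0 f H)" by simp
      then have rg: "resultant g f = (-1)^(degree g * degree f) * c ^ (degree g - degree H) * resultant f H"
        using sf(2) by (simp add: subresultant_resultant)
      have "resultant f H = c ^ degree H * (\<Prod>a\<in>#A. poly H a)"
        by (rule IH[of f H, OF _ f c]) (use N dH fg in auto)
      also have "(\<Prod>a\<in>#A. poly H a) = (\<Prod>a\<in>#A. poly g a)"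
        using polyg by (intro arg_cong[where f=prod_mset] image_mset_cong) auto
      finally have rH: "resultant f H = c ^ degree H * (\<Prod>a\<in>#A. poly g a)" .
      have pw: "c ^ (degree g - degree H) * c ^ degree H = c ^ degree g"
        using dH fg by (simp flip: power_add)
      have "resultant f g = ((-1)^(degree f * degree g) * (-1)^(degree g * degree f)) *
              (c ^ (degree g - degree H) * c ^ degree H) * (\<Prod>a\<in>#A. poly g a)"
        using sw rg rH by (simp add: mult_ac)
      also have "(-1)^(degree f * degree g) * (-1)^(degree g * degree f) = (1::complex)"
        by (simp add: mult.commute flip: power_add)
      finally show ?thesis using pw by simp
    qed
  qed
qed


lemma res_split:
  fixes f g :: "complex poly"
  assumes "f = Polynomial.smult c (\<Prod>a\<in>#A. [:-a,1:])" and "c \<noteq> 0"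
  shows "resultant f g = c ^ degree g * (\<Prod>a\<in>#A. poly g a)"
  using assms
proof (induction "degree f + degree g" arbitrary: f g c A rule: less_induct)
  case less
  have IH: "\<And>(f'::complex poly) (g'::complex poly) c' A'. degree f' + degree g' < degree f + degree g \<Longrightarrow> f' = Polynomial.smult c' (\<Prod>a\<in>#A'. [:-a,1:])
      \<Longrightarrow> c' \<noteq> 0 \<Longrightarrow> resultant f' g' = c' ^ degree g' * (\<Prod>a\<in>#A'. poly g' a)"
    using less.hyps by blast
  note sf = split_facts[OF less.prems]
  show ?case
  proof (cases "degree f \<le> degree g")
    case True
    show ?thesis by (rule res_step[OF IH less.prems refl True])
  next
    case False
    have Ane: "A \<noteq> {#}" using False sf by auto
    show ?thesis
    proof (cases "degree g = 0")
      case True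
      then obtain d where d: "g = [:d:]" by (auto elim: degree_eq_zeroE)
      have "poly [:d:] = (\<lambda>_. d)" by auto
      then show ?thesis using sf(1) d by (simp add: prod_mset_constant)
    next
      case dg: False
      then have g0: "g \<noteq> 0" by auto
      obtain B where B: "g = Polynomial.smult (lead_coeff g) (\<Prod>a\<in>#B. [:-a,1:])"
        using complex_split[OF g0] by blast
      have d0: "lead_coeff g \<noteq> 0" using g0 by simp
      note sg = split_facts[OF B d0]
      have "resultant g f = lead_coeff g ^ degree f * (\<Prod>b\<in>#B. poly f b)"
        by (rule res_step[OF IH B d0]) (use False in auto)
      also have "(\<Prod>b\<in>#B. poly f b) = (\<Prod>b\<in>#B. c * (\<Prod>a\<in>#A. b - a))"
        using sf(5) by simp
      also have "\<dots> = c ^ size B * (\<Prod>b\<in>#B. \<Prod>a\<in>#A. b - a)"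
        by (simp only: prod_mset.distrib prod_mset_constant)
      also have "(\<Prod>b\<in>#B. \<Prod>a\<in>#A. b - a) = (-1)^(size A * size B) * (\<Prod>a\<in>#A. \<Prod>b\<in>#B. a - b)"
        by (rule prod_swap_sign)
      finally have rg: "resultant g f = lead_coeff g ^ degree f * (c ^ size B * ((-1)^(size A * size B) * (\<Prod>a\<in>#A. \<Prod>b\<in>#B. a - b)))" .
      have "(\<Prod>a\<in>#A. poly g a) = (\<Prod>a\<in>#A. lead_coeff g * (\<Prod>b\<in>#B. a - b))"
        using sg(5) by simp
      also have "\<dots> = lead_coeff g ^ size A * (\<Prod>a\<in>#A. \<Prod>b\<in>#B. a - b)"
        by (simp only: prod_mset.distrib prod_mset_constant)
      finally have pg: "(\<Prod>a\<in>#A. poly g a) = lead_coeff g ^ size A * (\<Prod>a\<in>#A. \<Prod>b\<in>#B. a - b)" .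
      have "resultant f g = (-1)^(degree f * degree g) * resultant g f" by (rule resultant_swap)
      also have "\<dots> = ((-1)^(degree f * degree g) * (-1)^(degree f * degree g)) * c ^ degree g * 
           (lead_coeff g ^ degree f * (\<Prod>a\<in>#A. \<Prod>b\<in>#B. a - b))"
        unfolding rg using sf(1) sg(1) by (simp add: mult_ac)
      also have "((-1)^(degree f * degree g) * (-1)^(degree f * degree g)) = (1::complex)"
        by (simp flip: power_add)
      finally show ?thesis using pg sf(1) by simp
    qed
  qed
qed


lemma res_prod:
  fixes a :: "'i \<Rightarrow> complex" and b :: "'j \<Rightarrow> complex"
  shows "resultant (\<Prod>x\<in>X. [:-a x,1:]) (\<Prod>y\<in>Y. [:-b y,1:]) = (\<Prod>x\<in>X. \<Prod>y\<in>Y. (a x - b y))"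
proof -
  have f: "(\<Prod>x\<in>X. [:-a x,1:]) = Polynomial.smult 1 (\<Prod>z\<in>#image_mset a (mset_set X). [:-z,1:])"
    by (simp add: prod_unfold_prod_mset multiset.map_comp o_def)
  have "resultant (\<Prod>x\<in>X. [:-a x,1:]) (\<Prod>y\<in>Y. [:-b y,1:]) =
     (\<Prod>z\<in>#image_mset a (mset_set X). poly (\<Prod>y\<in>Y. [:-b y,1:]) z)"
    using res_split[OF f] by simp
  also have "\<dots> = (\<Prod>x\<in>X. poly (\<Prod>y\<in>Y. [:-b y,1:]) (a x))"
    by (simp add: prod_unfold_prod_mset multiset.map_comp o_def)
  also have "\<dots> = (\<Prod>x\<in>X. \<Prod>y\<in>Y. (a x - b y))"
    by (simp add: poly_prod)
  finally show ?thesis .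
qed



definition Pset :: "nat \<Rightarrow> nat set" where
  "Pset n = {k \<in> {1..<n}. coprime k n}"

definition rr :: "nat \<Rightarrow> nat \<Rightarrow> complex" where
  "rr n k = 2 * \<i> * complex_of_real (cos (pi * real k / real n))"

lemma finite_Pset[simp]: "finite (Pset n)" unfolding Pset_def by auto

lemma Pset_refl: assumes "j \<in> Pset m" shows "m - j \<in> Pset m"
proof -
  have j: "1 \<le> j" "j < m" "coprime j m" using assms unfolding Pset_def by auto
  have "gcd (m - j) m = gcd j m" using j by (intro gcd_diff2_nat) simp
  then have "coprime (m - j) m" using j(3) by (metis coprime_iff_gcd_eq_1)
  then show ?thesis using j unfolding Pset_def by simp
qed

lemma Pset_le: "j \<in> Pset m \<Longrightarrow> j \<le> m" unfolding Pset_def by simp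

lemma prod_Pset_flip: "(\<Prod>j\<in>Pset m. G (m - j)) = (\<Prod>j\<in>Pset m. G j)"
  by (rule prod.reindex_bij_witness[where i="\<lambda>j. m - j" and j="\<lambda>j. m - j"])
     (simp_all add: Pset_refl Pset_le)

lemma sum_Pset_flip: "(\<Sum>j\<in>Pset m. G (m - j)) = (\<Sum>j\<in>Pset m. G j)"
  by (rule sum.reindex_bij_witness[where i="\<lambda>j. m - j" and j="\<lambda>j. m - j"])
     (simp_all add: Pset_refl Pset_le)

lemma sum_Pset: "2 * (\<Sum>k\<in>Pset n. k) = n * card (Pset n)"
proof -
  have "(\<Sum>k\<in>Pset n. k) + (\<Sum>k\<in>Pset n. k) = (\<Sum>k\<in>Pset n. k) + (\<Sum>k\<in>Pset n. n - k)"
    using sum_Pset_flip[of "\<lambda>k. k" n] by simp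
  also have "\<dots> = (\<Sum>k\<in>Pset n. k + (n - k))" by (simp add: sum.distrib)
  also have "\<dots> = (\<Sum>k\<in>Pset n. n)" by (intro sum.cong) (auto simp: Pset_def)
  finally have "(\<Sum>k\<in>Pset n. k) + (\<Sum>k\<in>Pset n. k) = n * card (Pset n)" by simp
  then show ?thesis by (simp only: mult_2)
qed

lemma prod_v: "(\<Prod>k\<in>Pset n. cis (pi * real k / real n)) = \<i> ^ card (Pset n)"
proof (cases "n = 0")
  case True
  then show ?thesis by (simp add: Pset_def)
next
  case False
  define c where "c = card (Pset n)"
  have e1: "(\<Prod>k\<in>Pset n. cis (pi * real k / real n)) = (\<Prod>k\<in>Pset n. exp (\<i> * complex_of_real (pi * real k / real n)))"
    by (simp only: cis_conv_exp)
  have e2: "(\<Prod>k\<in>Pset n. exp (\<i> * complex_of_real (pi * real k / real n))) = exp (\<Sum>k\<in>Pset n. \<i> * complex_of_real (pi * real k / real n))"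
    by (simp add: exp_sum)
  have e3: "(\<Sum>k\<in>Pset n. \<i> * complex_of_real (pi * real k / real n)) = \<i> * complex_of_real (pi / real n * real (\<Sum>k\<in>Pset n. k))"
    by (simp add: sum_distrib_left)
  have e4: "pi / real n * real (\<Sum>k\<in>Pset n. k) = real c * (pi / 2)"
  proof -
    have "2 * (\<Sum>k\<in>Pset n. k) = n * c" using sum_Pset[of n] c_def by simp
    then have "real (2 * (\<Sum>k\<in>Pset n. k)) = real (n * c)" by (simp only:)
    then have "2 * real (\<Sum>k\<in>Pset n. k) = real n * real c" by simp
    then show ?thesis using False by (simp add: field_simps)
  qed
  have e5: "exp (\<i> * complex_of_real (real c * (pi / 2))) = cis (real c * (pi / 2))"
    by (simp only: cis_conv_exp)
  have e6: "cis (real c * (pi / 2)) = \<i> ^ c"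
    using Complex.DeMoivre[of "pi/2" c] cis_pi_half by simp
  have "(\<Prod>k\<in>Pset n. cis (pi * real k / real n)) = \<i> ^ c" by (simp only: e1 e2 e3 e4 e5 e6)
  then show ?thesis by (simp only: c_def)
qed

lemma pair_id:
  assumes "j \<le> m" "0 < m"
  shows "cis (pi * real k / real n) * (rr m j - rr n k) =
     \<i> * (cis (pi * real j / real m) - cis (pi * real k / real n)) *
         (cis (pi * real (m - j) / real m) + cis (pi * real k / real n))"
proof -
  define a where "a = pi * real j / real m"
  define b where "b = pi * real k / real n"
  define U where "U = cis a"
  define U' where "U' = cis (-a)"
  define V where "V = cis b"
  define V' where "V' = cis (-b)"
  have UU: "U * U' = 1" unfolding U_def U'_def by (simp add: cis_mult)
  have VV: "V * V' = 1" unfolding V_def V'_def by (simp add: cis_mult)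
  have c2: "2 * complex_of_real (cos x) = cis x + cis (-x)" for x
    by (simp add: complex_eq_iff)
  have rm: "rr m j = \<i> * (U + U')" unfolding rr_def U_def U'_def a_def
    by (simp add: c2[symmetric] mult.assoc)
  have rn: "rr n k = \<i> * (V + V')" unfolding rr_def V_def V'_def b_def
    by (simp add: c2[symmetric] mult.assoc)
  have "pi * real (m - j) / real m = pi - a" unfolding a_def using assms
    by (simp add: of_nat_diff field_simps)
  then have um: "cis (pi * real (m - j) / real m) = - U'"
    unfolding U'_def by (simp add: complex_eq_iff)
  have "V * (\<i>*(U+U') - \<i>*(V+V')) - \<i> * (U - V) * (-U' + V) = \<i>*(U*U' - V*V')"
    by (simp add: algebra_simps)
  then have "V * (\<i>*(U+U') - \<i>*(V+V')) = \<i> * (U - V) * (-U' + V)" using UU VV by simp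
  then show ?thesis unfolding um rm rn by (simp add: U_def V_def a_def b_def)
qed

lemma partC:
  assumes "2 \<le> m"
  shows "(\<Prod>j\<in>Pset m. \<Prod>k\<in>Pset n. (rr m j - rr n k)) =
         (\<Prod>j\<in>Pset m. \<Prod>k\<in>Pset n. (cis (2 * pi * real j / real m) - cis (2 * pi * real k / real n)))"
proof -
  define u where "u j = cis (pi * real j / real m)" for j
  define v where "v k = cis (pi * real k / real n)" for k
  let ?cm = "card (Pset m)" and ?cn = "card (Pset n)"
  have "(\<Prod>j\<in>Pset m. \<Prod>k\<in>Pset n. v k * (rr m j - rr n k)) =
        (\<Prod>j\<in>Pset m. (\<Prod>k\<in>Pset n. v k) * (\<Prod>k\<in>Pset n. (rr m j - rr n k)))"
    by (simp add: prod.distrib)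
  also have "\<dots> = (\<Prod>k\<in>Pset n. v k) ^ ?cm * (\<Prod>j\<in>Pset m. \<Prod>k\<in>Pset n. (rr m j - rr n k))"
    by (simp add: prod.distrib)
  finally have L: "(\<Prod>j\<in>Pset m. \<Prod>k\<in>Pset n. v k * (rr m j - rr n k)) =
     (\<i> ^ ?cn) ^ ?cm * (\<Prod>j\<in>Pset m. \<Prod>k\<in>Pset n. (rr m j - rr n k))"
    using prod_v[of n] unfolding v_def by simp
  have "(\<Prod>j\<in>Pset m. \<Prod>k\<in>Pset n. v k * (rr m j - rr n k)) =
        (\<Prod>j\<in>Pset m. \<Prod>k\<in>Pset n. \<i> * ((u j - v k) * (u (m - j) + v k)))"
    using pair_id[of _ m] assms unfolding u_def v_def
    by (intro prod.cong refl) (auto simp: Pset_def mult.assoc)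
  also have "\<dots> = (\<Prod>j\<in>Pset m. \<i> ^ ?cn * ((\<Prod>k\<in>Pset n. (u j - v k)) * (\<Prod>k\<in>Pset n. (u (m - j) + v k))))"
    by (simp add: prod.distrib)
  also have "\<dots> = (\<i> ^ ?cn) ^ ?cm * ((\<Prod>j\<in>Pset m. \<Prod>k\<in>Pset n. (u j - v k)) *
       (\<Prod>j\<in>Pset m. \<Prod>k\<in>Pset n. (u (m - j) + v k)))"
    by (simp add: prod.distrib)
  also have "(\<Prod>j\<in>Pset m. \<Prod>k\<in>Pset n. (u (m - j) + v k)) = (\<Prod>j\<in>Pset m. \<Prod>k\<in>Pset n. (u j + v k))"
    by (rule prod_Pset_flip)
  also have "(\<Prod>j\<in>Pset m. \<Prod>k\<in>Pset n. (u j - v k)) * (\<Prod>j\<in>Pset m. \<Prod>k\<in>Pset n. (u j + v k))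
      = (\<Prod>j\<in>Pset m. \<Prod>k\<in>Pset n. ((u j - v k) * (u j + v k)))"
    by (simp add: prod.distrib)
  also have "\<dots> = (\<Prod>j\<in>Pset m. \<Prod>k\<in>Pset n. (cis (2 * pi * real j / real m) - cis (2 * pi * real k / real n)))"
  proof (intro prod.cong refl)
    fix j k
    have "(u j - v k) * (u j + v k) = u j ^ 2 - v k ^ 2" by (simp add: algebra_simps power2_eq_square)
    also have "u j ^ 2 = cis (2 * pi * real j / real m)" unfolding u_def Complex.DeMoivre by (simp add: mult.assoc)
    also have "v k ^ 2 = cis (2 * pi * real k / real n)" unfolding v_def Complex.DeMoivre by (simp add: mult.assoc)
    finally show "(u j - v k) * (u j + v k) = cis (2 * pi * real j / real m) - cis (2 * pi * real k / real n)" .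
  qed
  finally show ?thesis using L by simp
qed



abbreviation fc :: "nat \<Rightarrow> complex poly" where
  "fc n \<equiv> map_poly of_int (fibpoly n)"

lemma fc_rec: "fc (Suc (Suc (Suc n))) = [:0,1:] * fc (Suc (Suc n)) + fc (Suc n)"
  unfolding fibpoly.simps of_int_poly_hom.hom_add of_int_poly_hom.hom_mult by simp

lemma sin_rec: "2 * cos (t::real) * sin (a + t) - sin a = sin (a + 2 * t)"
proof -
  have "sin (a + 2*t) = sin ((a + t) + t)" by (simp add: algebra_simps)
  moreover have "sin a = sin ((a + t) - t)" by simp
  ultimately show ?thesis unfolding sin_add sin_diff by (simp add: algebra_simps)
qed

lemma fib_eval:
  "poly (fc (Suc n)) (2 * \<i> * complex_of_real (cos t)) * complex_of_real (sin t)
     = \<i> ^ n * complex_of_real (sin (real (Suc n) * t))"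
proof (induction n rule: nat_less_induct)
  case (1 n)
  show ?case
  proof (cases n)
    case 0
    then show ?thesis by simp
  next
    case (Suc n1)
    show ?thesis
    proof (cases n1)
      case 0
      then have "n = 1" using Suc by simp
      then show ?thesis by (simp add: sin_double)
    next
      case (Suc n2)
      have n: "n = Suc (Suc n2)" using \<open>n = Suc n1\<close> Suc by simp
      define x where "x = 2 * \<i> * complex_of_real (cos t)"
      have IH1: "poly (fc (Suc (Suc n2))) x * complex_of_real (sin t) = \<i> ^ Suc n2 * complex_of_real (sin (real (Suc (Suc n2)) * t))"
        using "1" n unfolding x_def by auto
      have IH0: "poly (fc (Suc n2)) x * complex_of_real (sin t) = \<i> ^ n2 * complex_of_real (sin (real (Suc n2) * t))"
        using "1" n unfolding x_def by auto
      have "poly (fc (Suc n)) x * complex_of_real (sin t) =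
            x * (poly (fc (Suc (Suc n2))) x * complex_of_real (sin t)) + poly (fc (Suc n2)) x * complex_of_real (sin t)"
        unfolding n fc_rec by (simp add: algebra_simps)
      also have "\<dots> = x * (\<i> ^ Suc n2 * complex_of_real (sin (real (Suc (Suc n2)) * t))) + \<i> ^ n2 * complex_of_real (sin (real (Suc n2) * t))"
        unfolding IH1 IH0 ..
      also have "\<dots> = \<i> ^ n2 * complex_of_real (sin (real (Suc n2) * t) - 2 * cos t * sin (real (Suc (Suc n2)) * t))"
        unfolding x_def by (simp add: algebra_simps)
      also have "sin (real (Suc n2) * t) - 2 * cos t * sin (real (Suc (Suc n2)) * t) = - sin (real (Suc (Suc (Suc n2))) * t)"
        using sin_rec[of t "real (Suc n2) * t"] by (simp add: algebra_simps)
      also have "\<i> ^ n2 * complex_of_real (- sin (real (Suc (Suc (Suc n2))) * t)) = \<i> ^ n * complex_of_real (sin (real (Suc n) * t))"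
        unfolding n by simp
      finally show ?thesis unfolding x_def .
    qed
  qed
qed

lemma fib_deg: "degree (fibpoly (Suc n)) = n \<and> lead_coeff (fibpoly (Suc n)) = 1"
proof (induction n rule: nat_less_induct)
  case (1 n)
  show ?case
  proof (cases n)
    case 0
    then show ?thesis by simp
  next
    case (Suc n1)
    show ?thesis
    proof (cases n1)
      case 0
      then show ?thesis using Suc by simp
    next
      case (Suc n2)
      have n: "n = Suc (Suc n2)" using \<open>n = Suc n1\<close> Suc by simp
      have A: "degree (fibpoly (Suc (Suc n2))) = Suc n2" "lead_coeff (fibpoly (Suc (Suc n2))) = 1"
        using "1" n by auto
      have B: "degree (fibpoly (Suc n2)) = n2"
        using "1" n by auto
      have nz: "fibpoly (Suc (Suc n2)) \<noteq> 0" using A by auto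
      have dm: "degree ([:0,1:] * fibpoly (Suc (Suc n2))) = Suc (Suc n2)"
        using A nz by (subst degree_mult_eq) auto
      have lm: "lead_coeff ([:0,1:] * fibpoly (Suc (Suc n2))) = 1"
        using A by (simp only: lead_coeff_mult) simp
      have F: "fibpoly (Suc n) = [:0,1:] * fibpoly (Suc (Suc n2)) + fibpoly (Suc n2)"
        unfolding n by simp
      have "degree (fibpoly (Suc n2)) < degree ([:0,1:] * fibpoly (Suc (Suc n2)))" using dm B by simp
      then have "degree (fibpoly (Suc n)) = Suc (Suc n2) \<and> lead_coeff (fibpoly (Suc n)) = 1"
        unfolding F using dm lm
        by (metis add.commute degree_add_eq_left lead_coeff_add_le)
      then show ?thesis using n by (auto simp del: fibpoly.simps)
    qed
  qed
qed


lemma prod_roots_dvd: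
  assumes "finite S" "\<forall>a\<in>S. poly p a = 0"
  shows "(\<Prod>a\<in>S. [:-a,1:]) dvd (p :: 'a::idom poly)"
  using assms
proof (induction S arbitrary: p rule: finite_induct)
  case empty
  then show ?case by simp
next
  case (insert x S)
  have "poly p x = 0" using insert by simp
  then obtain q where q: "p = [:-x,1:] * q" using poly_eq_0_iff_dvd by (metis dvdE)
  have "\<forall>a\<in>S. poly q a = 0"
  proof
    fix a assume a: "a \<in> S"
    then have "a \<noteq> x" using insert by auto
    moreover have "poly p a = 0" using insert a by simp
    ultimately show "poly q a = 0" using q by simp
  qed
  then have "(\<Prod>a\<in>S. [:-a,1:]) dvd q" using insert by simp
  then have "[:-x,1:] * (\<Prod>a\<in>S. [:-a,1:]) dvd [:-x,1:] * q" by (rule mult_dvd_mono[OF dvd_refl])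
  then show ?case by (simp only: prod.insert[OF insert(1,2)] q)
qed

lemma monic_dvd_eq:
  fixes p q :: "'a::idom poly"
  assumes "p dvd q" "monic p" "monic q" "degree p = degree q"
  shows "p = q"
proof -
  obtain r where r: "q = p * r" using assms(1) by (auto simp: dvd_def)
  have q0: "q \<noteq> 0" using assms(3) by auto
  then have p0: "p \<noteq> 0" and r0: "r \<noteq> 0" using r by auto
  have "degree q = degree p + degree r" using r p0 r0 by (simp add: degree_mult_eq)
  then have "degree r = 0" using assms(4) by simp
  then obtain c where c: "r = [:c:]" by (auto elim: degree_eq_zeroE)
  have "lead_coeff q = lead_coeff p * c" using r c by (simp add: lead_coeff_mult)
  then have "c = 1" using assms by simp
  then show ?thesis using r c by simp
qed

lemma linprod_set:
  fixes S :: "'a::idom set"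
  assumes "finite S"
  shows "degree (\<Prod>a\<in>S. [:-a,1:]) = card S \<and> monic (\<Prod>a\<in>S. [:-a,1:])"
  using assms
proof (induction S rule: finite_induct)
  case empty
  then show ?case by simp
next
  case (insert x S)
  have nz: "(\<Prod>a\<in>S. [:-a,1:]) \<noteq> 0" using insert by auto
  have "degree ([:-x,1:] * (\<Prod>a\<in>S. [:-a,1:])) = degree [:-x,1:] + degree (\<Prod>a\<in>S. [:-a,1:])"
    by (rule degree_mult_eq) (use nz in auto)
  moreover have "lead_coeff ([:-x,1:] * (\<Prod>a\<in>S. [:-a,1:])) = lead_coeff [:-x,1:] * lead_coeff (\<Prod>a\<in>S. [:-a,1:])"
    by (rule lead_coeff_mult)
  ultimately show ?case using insert by (auto simp del: mult_pCons_left)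
qed

lemma rr_inj: "inj_on (rr n) {1..<n}"
proof
  fix j k assume j: "j \<in> {1..<n}" and k: "k \<in> {1..<n}" and e: "rr n j = rr n k"
  have "cos (pi * real j / real n) = cos (pi * real k / real n)"
    using e unfolding rr_def by simp
  moreover have "0 \<le> pi * real j / real n" "pi * real j / real n \<le> pi"
    "0 \<le> pi * real k / real n" "pi * real k / real n \<le> pi"
    using j k by (auto simp: field_simps)
  ultimately have "pi * real j / real n = pi * real k / real n" using cos_inj_pi by blast
  then show "j = k" using j by (simp add: field_simps)
qed

lemma fc_root:
  assumes "k \<in> {1..<n}"
  shows "poly (fc n) (rr n k) = 0"
proof -
  obtain n' where n: "n = Suc n'" using assms by (cases n) auto
  define t where "t = pi * real k / real n"
  have "0 < t" "t < pi" using assms unfolding t_def by (auto simp: field_simps)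
  then have st: "sin t \<noteq> 0" using sin_gt_zero by force
  have "real (Suc n') * t = real k * pi" unfolding t_def n by (simp add: field_simps)
  then have "sin (real (Suc n') * t) = 0" by (simp add: sin_npi2)
  then have "poly (fc n) (rr n k) * complex_of_real (sin t) = 0"
    using fib_eval[of n' t] unfolding rr_def t_def n by simp
  then show ?thesis using st by simp
qed

lemma fc_prod:
  assumes "1 \<le> n"
  shows "fc n = (\<Prod>k\<in>{1..<n}. [:-rr n k,1:])"
proof -
  obtain n' where n: "n = Suc n'" using assms by (cases n) auto
  have eq: "(\<Prod>k\<in>{1..<n}. [:-rr n k,1:]) = (\<Prod>a\<in>rr n ` {1..<n}. [:-a,1:])"
    using prod.reindex[OF rr_inj[of n], of "\<lambda>a. [:-a,1:]"] by (simp add: o_def)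
  have "(\<Prod>a\<in>rr n ` {1..<n}. [:-a,1:]) dvd fc n"
    by (rule prod_roots_dvd) (auto intro: fc_root)
  moreover have "degree (\<Prod>a\<in>rr n ` {1..<n}. [:-a,1:]) = n'" "monic (\<Prod>a\<in>rr n ` {1..<n}. [:-a,1:])"
    using linprod_set[of "rr n ` {1..<n}"] card_image[OF rr_inj] n by auto
  moreover have "degree (fc n) = n'" "monic (fc n)"
    using fib_deg[of n'] n by (auto simp: of_int_hom.degree_map_poly_hom of_int_hom.hom_lead_coeff)
  ultimately show ?thesis using eq monic_dvd_eq by metis
qed

lemma fc_roots:
  assumes "1 \<le> n"
  shows "poly (fc n) z = 0 \<longleftrightarrow> z \<in> rr n ` {1..<n}"
  unfolding fc_prod[OF assms] by (auto simp: poly_prod)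




lemma normalized_int_poly_lc:
  fixes q :: "int poly"
  assumes "normalize q = q" "q \<noteq> 0"
  shows "lead_coeff q > 0"
proof -
  have "unit_factor q = 1" using unit_factor_normalize[OF assms(2)] assms(1) by simp
  then have "unit_factor (lead_coeff q) = 1" by (simp add: unit_factor_poly_def)
  then show ?thesis by (simp add: sgn_1_pos)
qed

lemma monic_factor:
  fixes q F :: "int poly"
  assumes "q dvd F" "monic F" "normalize q = q"
  shows "monic q"
proof -
  obtain e where e: "F = q * e" using assms(1) by (auto simp: dvd_def)
  have q0: "q \<noteq> 0" using e assms(2) by auto
  have "lead_coeff q * lead_coeff e = 1" using e assms(2) by (simp add: lead_coeff_mult)
  then have "lead_coeff q dvd 1" by (metis dvd_triv_left)
  then have "lead_coeff q = 1 \<or> lead_coeff q = -1" by (simp add: zdvd1_eq abs_eq_iff')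
  then show ?thesis using normalized_int_poly_lc[OF assms(3) q0] by auto
qed

lemma common_root_res0:
  fixes f g :: "complex poly"
  assumes "f \<noteq> 0" "poly f z = 0" "poly g z = 0"
  shows "resultant f g = 0"
proof -
  obtain A where A: "f = Polynomial.smult (lead_coeff f) (\<Prod>a\<in>#A. [:-a,1:])"
    using complex_split[OF assms(1)] by blast
  have c: "lead_coeff f \<noteq> 0" using assms(1) by simp
  have "poly f z = lead_coeff f * (\<Prod>a\<in>#A. z - a)" using split_facts(5)[OF A c] by simp
  then have "(\<Prod>a\<in>#A. z - a) = 0" using assms(2) c by simp
  then have "z \<in># A" by (auto simp: prod_mset_zero_iff)
  then have "(\<Prod>a\<in>#A. poly g a) = 0" using assms(3) by (auto simp: prod_mset_zero_iff)
  then show ?thesis using res_split[OF A c] by simp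
qed

lemma irr_common_root_dvd:
  fixes p q :: "int poly"
  assumes irr: "irreducible p" and q0: "q \<noteq> 0"
    and rp: "poly (of_int_poly p) z = (0::complex)" and rq: "poly (of_int_poly q) z = (0::complex)"
  shows "p dvd q"
proof -
  have p0: "p \<noteq> 0" using irr by auto
  have "(of_int_poly p :: complex poly) \<noteq> 0" using p0 by simp
  then have "resultant (of_int_poly p) (of_int_poly q :: complex poly) = 0"
    using common_root_res0 rp rq by blast
  then have "(of_int (resultant p q) :: complex) = 0" by (simp add: of_int_hom.resultant_hom)
  then have "resultant p q = 0" by simp
  then have dg: "degree (gcd p q) \<noteq> 0" using resultant_0_gcd by blast
  obtain e where e: "p = gcd p q * e" by (metis dvd_def gcd_dvd1)
  from irreducibleD[OF irr e] have "is_unit (gcd p q) \<or> is_unit e" .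
  moreover have "\<not> is_unit (gcd p q)" using dg by (auto simp: is_unit_poly_iff)
  ultimately have "is_unit e" by blast
  then have "p dvd gcd p q" using e mult_unit_dvd_iff by (metis dvd_refl)
  then show ?thesis using gcd_dvd2 dvd_trans by blast
qed


definition Sfib :: "nat \<Rightarrow> int poly set" where
  "Sfib n = {p :: int poly. monic p \<and> irreducible p \<and> p dvd fibpoly n \<and>
                      (\<forall>k\<in>{1..<n}. \<not> p dvd fibpoly k)}"

definition Zs :: "int poly \<Rightarrow> complex set" where
  "Zs p = {z. poly (of_int_poly p) z = 0}"

lemma fibotomic_Sfib: "2 \<le> n \<Longrightarrow> fibotomic n = \<Prod>(Sfib n)"
  unfolding fibotomic_def Sfib_def by simp

lemma fib_nz: "1 \<le> n \<Longrightarrow> fibpoly n \<noteq> 0"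
  using fib_deg[of "n - 1"] by (cases n) auto

lemma fib_monic: "1 \<le> n \<Longrightarrow> monic (fibpoly n)"
  using fib_deg[of "n - 1"] by (cases n) auto

lemma sqfree_factor:
  fixes P :: "complex poly"
  assumes R: "finite R" and mP: "monic P" and dv: "P dvd (\<Prod>z\<in>R. [:-z,1:])"
  shows "P = (\<Prod>z\<in>{z. poly P z = 0}. [:-z,1:]) \<and> {z. poly P z = 0} \<subseteq> R"
proof -
  obtain Q where PQ: "(\<Prod>z\<in>R. [:-z,1:]) = P * Q" using dv by (auto simp: dvd_def)
  have lin: "degree (\<Prod>z\<in>R. [:-z,1:]) = card R" "monic (\<Prod>z\<in>R. [:-z,1:])"
    using linprod_set[OF R] by auto
  then have nz: "P * Q \<noteq> 0" using PQ by auto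
  then have P0: "P \<noteq> 0" and Q0: "Q \<noteq> 0" by auto
  define ZP where "ZP = {z. poly P z = 0}"
  define ZQ where "ZQ = {z. poly Q z = 0}"
  have rootsR: "poly (\<Prod>z\<in>R. [:-z,1:]) w = 0 \<longleftrightarrow> w \<in> R" for w
    using R by (auto simp: poly_prod)
  have ZPR: "ZP \<subseteq> R" unfolding ZP_def using rootsR PQ by auto
  have ZQR: "ZQ \<subseteq> R" unfolding ZQ_def using rootsR PQ by auto
  have RZ: "R \<subseteq> ZP \<union> ZQ" unfolding ZP_def ZQ_def using rootsR PQ by auto
  have fZP: "finite ZP" and fZQ: "finite ZQ" using ZPR ZQR R finite_subset by auto
  have "(\<Prod>z\<in>ZP. [:-z,1:]) dvd P" by (rule prod_roots_dvd[OF fZP]) (auto simp: ZP_def)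
  then have dP: "card ZP \<le> degree P" using dvd_imp_degree_le[OF _ P0] linprod_set[OF fZP] by metis
  have "(\<Prod>z\<in>ZQ. [:-z,1:]) dvd Q" by (rule prod_roots_dvd[OF fZQ]) (auto simp: ZQ_def)
  then have dQ: "card ZQ \<le> degree Q" using dvd_imp_degree_le[OF _ Q0] linprod_set[OF fZQ] by metis
  have "degree P + degree Q = card R" using PQ lin P0 Q0 by (simp add: degree_mult_eq)
  moreover have "card R \<le> card ZP + card ZQ"
    using card_mono[OF finite_UnI[OF fZP fZQ] RZ] card_Un_le[of ZP ZQ] by linarith
  ultimately have "degree P = card ZP" using dP dQ by linarith
  then have "(\<Prod>z\<in>ZP. [:-z,1:]) = P"
    using monic_dvd_eq[OF \<open>(\<Prod>z\<in>ZP. [:-z,1:]) dvd P\<close>] linprod_set[OF fZP] mP by auto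
  then show ?thesis using ZPR unfolding ZP_def by auto
qed

lemma fc_prod_set: "1 \<le> n \<Longrightarrow> fc n = (\<Prod>z\<in>rr n ` {1..<n}. [:-z,1:])"
  using fc_prod[of n] prod.reindex[OF rr_inj[of n], of "\<lambda>a. [:-a,1:]"] by (simp add: o_def)

lemma S_roots:
  assumes n: "2 \<le> n" and p: "p \<in> Sfib n"
  shows "of_int_poly p = (\<Prod>z\<in>Zs p. [:-z,1:]) \<and> Zs p \<subseteq> rr n ` {1..<n}"
proof -
  have "of_int_poly p dvd fc n" using p unfolding Sfib_def by (auto intro: of_int_poly_hom.hom_dvd)
  then have dv: "(of_int_poly p :: complex poly) dvd (\<Prod>z\<in>rr n ` {1..<n}. [:-z,1:])"
    using fc_prod_set[of n] n by simp
  have m: "monic (of_int_poly p :: complex poly)" using p unfolding Sfib_def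
    by (simp add: of_int_hom.degree_map_poly_hom of_int_hom.hom_lead_coeff)
  show ?thesis using sqfree_factor[OF _ m dv] unfolding Zs_def by auto
qed


lemma S_prim:
  assumes n: "2 \<le> n" and p: "p \<in> Sfib n" and z: "z \<in> Zs p"
  shows "z \<in> rr n ` Pset n"
proof -
  obtain k where k: "k \<in> {1..<n}" and zk: "z = rr n k" using S_roots[OF n p] z by auto
  have "coprime k n"
  proof (rule ccontr)
    assume nc: "\<not> coprime k n"
    define g where "g = gcd k n"
    have g1: "g \<noteq> 1" using nc unfolding g_def by (metis coprime_iff_gcd_eq_1)
    have g0: "g \<noteq> 0" using n unfolding g_def by simp
    define n' where "n' = n div g"
    define k' where "k' = k div g"
    have nn: "n = n' * g" unfolding n'_def g_def by simp
    have kk: "k = k' * g" unfolding k'_def g_def by simp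
    have k'1: "1 \<le> k'" using k kk by (cases k') auto
    have "k' * g < n' * g" using k kk nn by simp
    then have k'n': "k' < n'" by simp
    have g2: "2 \<le> g" using g0 g1 by linarith
    have "n' * 1 < n' * g" using g2 k'n' by (intro mult_strict_left_mono) auto
    then have n'n: "n' < n" using nn by simp
    have "pi * real k / real n = pi * real k' / real n'"
      using g0 nn kk by (simp add: field_simps)
    then have "rr n k = rr n' k'" unfolding rr_def by simp
    then have "poly (fc n') z = 0" using fc_root[of k' n'] k'1 k'n' zk by simp
    moreover have "poly (of_int_poly p) z = (0::complex)" using z unfolding Zs_def by simp
    moreover have "irreducible p" using p unfolding Sfib_def by simp
    moreover have "fibpoly n' \<noteq> 0" using fib_nz[of n'] k'1 k'n' by simp
    ultimately have "p dvd fibpoly n'" using irr_common_root_dvd by blast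
    moreover have "n' \<in> {1..<n}" using k'1 k'n' n'n by simp
    ultimately show False using p unfolding Sfib_def by blast
  qed
  then show ?thesis using k zk unfolding Pset_def by auto
qed


lemma root_dvd:
  fixes q F :: "int poly"
  assumes "q dvd F" "poly (of_int_poly q) z = (0::complex)"
  shows "poly (of_int_poly F) z = 0"
proof -
  obtain e where "F = q * e" using assms(1) by (auto simp: dvd_def)
  then show ?thesis using assms(2) by (simp add: of_int_poly_hom.hom_mult)
qed

lemma pf_root:
  fixes F :: "int poly" and z :: complex
  assumes "poly (of_int_poly (prod_mset (prime_factorization F))) z = (0::complex)"
  shows "\<exists>q. q \<in># prime_factorization F \<and> poly (of_int_poly q) z = (0::complex)"
proof -
  have "poly (prod_mset (image_mset of_int_poly (prime_factorization F))) z = (0::complex)"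
    using assms by (simp only: of_int_poly_hom.hom_prod_mset)
  then have "(\<Prod>q\<in>#prime_factorization F. poly (of_int_poly q) z) = (0::complex)"
    by (simp only: poly_prod_mset)
  then have "0 \<in># image_mset (\<lambda>q. poly (of_int_poly q) z) (prime_factorization F)"
    by (simp only: prod_mset_zero_iff)
  then show ?thesis by auto
qed

lemma S_cover:
  assumes n: "2 \<le> n" and k: "k \<in> Pset n"
  shows "\<exists>p\<in>Sfib n. rr n k \<in> Zs p"
proof -
  define z where "z = rr n k"
  define F where "F = fibpoly n"
  have F0: "F \<noteq> 0" and mF: "monic F" using fib_nz fib_monic n unfolding F_def by auto
  have k1: "k \<in> {1..<n}" and cop: "coprime k n" using k unfolding Pset_def by auto
  have "normalize (prod_mset (prime_factorization F)) = F"
    using prod_mset_prime_factorization_weak[OF F0] normalize_monic[OF mF] by simp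
  then have "F dvd normalize (prod_mset (prime_factorization F))" by simp
  then have dvF: "F dvd prod_mset (prime_factorization F)"
    by (simp only: dvd_normalize_iff)
  have "poly (of_int_poly F) z = (0::complex)" using fc_root[OF k1] unfolding z_def F_def .
  from root_dvd[OF dvF this]
  have "poly (of_int_poly (prod_mset (prime_factorization F))) z = (0::complex)" .
  then obtain q where qin: "q \<in># prime_factorization F" and qz: "poly (of_int_poly q) z = (0::complex)"
    using pf_root by blast
  have pq: "prime q" using in_prime_factors_imp_prime[OF qin] .
  have irr: "irreducible q" using pq by (simp add: prime_elem_imp_irreducible prime_imp_prime_elem)
  have dq: "q dvd F" using in_prime_factors_imp_dvd[OF qin] .
  have mq: "monic q" using monic_factor[OF dq mF normalize_prime[OF pq]] .
  have nd: "\<not> q dvd fibpoly k'" if k': "k' \<in> {1..<n}" for k'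
  proof
    assume "q dvd fibpoly k'"
    from root_dvd[OF this qz] have "poly (fc k') z = 0" .
    then obtain j where j: "j \<in> {1..<k'}" and zj: "z = rr k' j"
      using fc_roots[of k'] k' by auto
    have "cos (pi * real k / real n) = cos (pi * real j / real k')"
      using zj unfolding z_def rr_def by simp
    moreover have "0 \<le> pi * real k / real n" "pi * real k / real n \<le> pi"
      "0 \<le> pi * real j / real k'" "pi * real j / real k' \<le> pi"
      using j k1 by (auto simp: field_simps)
    ultimately have "pi * real k / real n = pi * real j / real k'" using cos_inj_pi by blast
    then have "real k * real k' = real j * real n" using j k1 by (simp add: field_simps)
    then have "k * k' = j * n" by (metis of_nat_eq_iff of_nat_mult)
    then have "n dvd k * k'" by simp
    then have "n dvd k'" using cop by (metis coprime_commute coprime_dvd_mult_right_iff)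
    then show False using k' by (auto dest: dvd_imp_le)
  qed
  have "q \<in> Sfib n" using mq irr dq nd unfolding Sfib_def F_def by blast
  moreover have "rr n k \<in> Zs q" using qz unfolding Zs_def z_def by simp
  ultimately show ?thesis by blast
qed

lemma S_disj:
  assumes p: "p \<in> Sfib n" and q: "q \<in> Sfib n" and zp: "z \<in> Zs p" and zq: "z \<in> Zs q"
  shows "p = q"
proof -
  have irrp: "irreducible p" and irrq: "irreducible q" and mp: "monic p" and mq: "monic q"
    using p q unfolding Sfib_def by auto
  have q0: "q \<noteq> 0" using mq by auto
  have "p dvd q" using irr_common_root_dvd[OF irrp q0] zp zq unfolding Zs_def by auto
  then obtain e where e: "q = p * e" by (auto simp: dvd_def)
  from irreducibleD[OF irrq e] have "is_unit p \<or> is_unit e" .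
  then have "is_unit e" using irrp by (auto simp: irreducible_def)
  then obtain c where c: "e = [:c:]" by (auto simp: is_unit_poly_iff)
  have "lead_coeff q = lead_coeff p * c" using e c by (simp add: lead_coeff_mult)
  then have "c = 1" using mp mq by simp
  then show ?thesis using e c by simp
qed

lemma S_finite:
  assumes n: "2 \<le> n"
  shows "finite (Sfib n)"
proof (rule inj_on_finite[where f=Zs and B="Pow (rr n ` {1..<n})"])
  show "inj_on Zs (Sfib n)"
  proof
    fix p q assume p: "p \<in> Sfib n" and q: "q \<in> Sfib n" and e: "Zs p = Zs q"
    have "(of_int_poly p :: complex poly) = of_int_poly q"
      using S_roots[OF n p] S_roots[OF n q] e by simp
    then show "p = q" by simp
  qed
  show "Zs ` Sfib n \<subseteq> Pow (rr n ` {1..<n})" using S_roots[OF n] by auto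
qed auto

lemma fibotomic_prod:
  assumes n: "2 \<le> n"
  shows "(of_int_poly (fibotomic n) :: complex poly) = (\<Prod>k\<in>Pset n. [:-rr n k,1:])"
proof -
  have fin: "finite (Sfib n)" by (rule S_finite[OF n])
  have finZ: "\<forall>p\<in>Sfib n. finite (Zs p)"
    using S_roots[OF n] finite_subset by blast
  have disj: "\<forall>p\<in>Sfib n. \<forall>q\<in>Sfib n. p \<noteq> q \<longrightarrow> Zs p \<inter> Zs q = {}"
    using S_disj by blast
  have U: "\<Union>(Zs ` Sfib n) = rr n ` Pset n"
    using S_prim[OF n] S_cover[OF n] by blast
  have "(of_int_poly (fibotomic n) :: complex poly) = (\<Prod>p\<in>Sfib n. of_int_poly p)"
    unfolding fibotomic_Sfib[OF n] by (simp add: of_int_poly_hom.hom_prod)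
  also have "\<dots> = (\<Prod>p\<in>Sfib n. \<Prod>z\<in>Zs p. [:-z,1:])"
    using S_roots[OF n] by (intro prod.cong) auto
  also have "\<dots> = (\<Prod>z\<in>\<Union>(Zs ` Sfib n). [:-z,1:])"
    by (rule prod.UNION_disjoint[OF fin finZ disj, symmetric])
  also have "\<dots> = (\<Prod>z\<in>rr n ` Pset n. [:-z,1:])" unfolding U ..
  also have "\<dots> = (\<Prod>k\<in>Pset n. [:-rr n k,1:])"
  proof -
    have "inj_on (rr n) (Pset n)" by (rule inj_on_subset[OF rr_inj]) (auto simp: Pset_def)
    then show ?thesis using prod.reindex[of "rr n" "Pset n" "\<lambda>a. [:-a,1:]"] by (simp add: o_def)
  qed
  finally show ?thesis .
qed


lemma cyc_Pset:
  assumes "2 \<le> k"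
  shows "cyclotomic k = (\<Prod>j\<in>Pset k. [:- cis (2 * pi * real j / real k), 1:])"
proof -
  have nz: "j \<noteq> 0" if "coprime j k" for j
  proof
    assume "j = 0"
    then have "k = 1" using that by simp
    then show False using assms by simp
  qed
  have "{j. j < k \<and> coprime j k} = Pset k"
    using nz by (force simp: Pset_def)
  then show ?thesis unfolding cyclotomic_def by simp
qed

theorem mainTheorem9:
  fixes m n :: nat
  assumes "2 \<le> m" and "m < n"
  shows "resultant (map_poly of_int (fibotomic m)) (map_poly of_int (fibotomic n))
         = resultant (cyclotomic m) (cyclotomic n)"
proof -
  have n2: "2 \<le> n" using assms by simp
  have "resultant (map_poly of_int (fibotomic m)) (map_poly of_int (fibotomic n))
      = resultant (\<Prod>j\<in>Pset m. [:-rr m j,1:]) (\<Prod>k\<in>Pset n. [:-rr n k,1:])"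
    using fibotomic_prod[OF assms(1)] fibotomic_prod[OF n2] by simp
  also have "\<dots> = (\<Prod>j\<in>Pset m. \<Prod>k\<in>Pset n. (rr m j - rr n k))"
    by (rule res_prod)
  also have "\<dots> = (\<Prod>j\<in>Pset m. \<Prod>k\<in>Pset n. (cis (2 * pi * real j / real m) - cis (2 * pi * real k / real n)))"
    by (rule partC[OF assms(1)])
  also have "\<dots> = resultant (\<Prod>j\<in>Pset m. [:- cis (2 * pi * real j / real m), 1:])
                             (\<Prod>k\<in>Pset n. [:- cis (2 * pi * real k / real n), 1:])"
    by (rule res_prod[symmetric])
  also have "\<dots> = resultant (cyclotomic m) (cyclotomic n)"
    using cyc_Pset[OF assms(1)] cyc_Pset[OF n2] by simp
  finally show ?thesis .
qed

end
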